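(* Let $E$ be any execution of Algorithm C (described in the context). The sequence of values taken by the max-register $\mathit{logNumIncrems}$ in $E$ has the following properties: (i) it begins at $-1$; (ii) it is increasing; (iii) for every integer $i>cln$, if $i$ appears in the sequence then so does $i-1$.
   Context: Shared objects are treated as atomic. An exact counter supports Increment and Read; a Read returns the number of preceding Increments. A max-register supports MaxWrite$(v)$ and MaxRead; a MaxRead returns the largest value among all preceding MaxWrites, or the initial value if there was none. Algorithm C has the following parameters: - $k\ge2$ an integer, $n$ the number of processes, $m$ a positive integer; - $cln=\lceil\log_k n\rceil$ and $N=k^{cln}$. Shared objects: - an array $\mathit{Bucket}[0..\max\{1,\lceil\log_k\lceil m/n\rceil\rceil+1\}-1]$ of exact counters, each initially $0$; - a max-register $\mathit{logNumIncrems}$ with initial value $-1$. Each process has local variables $\mathit{lcounter}=0$, $\mathit{index}=0$ and $\mathit{threshold}=1$. Increment(): - $\mathit{lcounter}\gets\mathit{lcounter}+1$. - If $\mathit{lcounter}=\mathit{threshold}$, then: - $\mathit{Bucket}[\mathit{index}]$.Increment(); - $\mathit{lcounter}\gets0$; - $val\gets\mathit{Bucket}[\mathit{index}]$.Read(); - if $\mathit{index}=0$ and $val<N$, then $\mathit{logNumIncrems}$.MaxWrite$(\lfloor\log_k val\rfloor)$; - if $val\ge N$, then: - $\mathit{logNumIncrems}$.MaxWrite$(cln+\mathit{index})$; - $\mathit{index}\gets\mathit{index}+1$; - if $\mathit{index}>1$, then $\mathit{threshold}\gets k\cdot\mathit{threshold}$; - if $\mathit{index}=1$, then $\mathit{threshold}\gets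 k-1$. Read(): - $r\gets\mathit{logNumIncrems}$.MaxRead(). - If $r\ge0$, return $k^{r+1}$; otherwise return $0$. *)

theory Defs
  imports Complex_Main
begin

text \<open>Model of Algorithm C as an asynchronous shared-memory system.
Every step of a process performs at most one access to a shared object
(atomic), together with the local computation that follows it.\<close>

datatype pcv =
    Idle        \<comment> \<open>no pending operation\<close>
  | IncBucket   \<comment> \<open>about to perform Bucket[index].Increment()\<close>
  | ReadBucket  \<comment> \<open>about to perform val := Bucket[index].Read()\<close>
  | WriteLog    \<comment> \<open>about to perform logNumIncrems.MaxWrite(floor(log_k val))\<close>
  | WriteIdx    \<comment> \<open>about to perform logNumIncrems.MaxWrite(cln+index), then update index/threshold\<close>
  | DoRead      \<comment> \<open>about to perform logNumIncrems.MaxRead() (operation Read)\<close>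

record lstate =
  lcounter  :: nat
  index     :: nat
  threshold :: nat
  val       :: nat
  pc        :: pcv

record config =
  Bucket :: "nat \<Rightarrow> nat"
  logNumIncrems :: int
  loc :: "nat \<Rightarrow> lstate"

definition cln :: "nat \<Rightarrow> nat \<Rightarrow> nat" where
  "cln k n = nat \<lceil>log (real k) (real n)\<rceil>"

definition NN :: "nat \<Rightarrow> nat \<Rightarrow> nat" where
  "NN k n = k ^ cln k n"

definition bsize :: "nat \<Rightarrow> nat \<Rightarrow> nat \<Rightarrow> nat" where
  "bsize k n m = max 1 (nat (\<lceil>log (real k) (real_of_int \<lceil>real m / real n\<rceil>)\<rceil> + 1))"

definition init_lstate :: lstate where
  "init_lstate = \<lparr>lcounter = 0, index = 0, threshold = 1, val = 0, pc = Idle\<rparr>"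

definition init_config :: config where
  "init_config = \<lparr>Bucket = (\<lambda>_. 0), logNumIncrems = -1, loc = (\<lambda>_. init_lstate)\<rparr>"

text \<open>One atomic step of process p (a single shared-object access, or the
local start of an operation).  Accesses to Bucket[index] are only enabled when
index lies within the bounds of the array.\<close>
definition step :: "nat \<Rightarrow> nat \<Rightarrow> nat \<Rightarrow> nat \<Rightarrow> config \<Rightarrow> config \<Rightarrow> bool" where
  "step k n m p c c' \<longleftrightarrow>
     (let l = loc c p; setl = (\<lambda>l'. c\<lparr>loc := (loc c)(p := l')\<rparr>) in
      case pc l of
        Idle \<Rightarrow>
          \<comment> \<open>invoke Increment(): lcounter := lcounter+1; test against threshold\<close>
          (c' = setl (l\<lparr>lcounter := lcounter l + 1,
                          pc := (if lcounter l + 1 = threshold l then IncBucket else Idle)\<rparr>))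
          \<or>
          \<comment> \<open>invoke Read()\<close>
          (c' = setl (l\<lparr>pc := DoRead\<rparr>))
      | DoRead \<Rightarrow> c' = setl (l\<lparr>pc := Idle\<rparr>)
      | IncBucket \<Rightarrow>
          index l < bsize k n m \<and>
          c' = (setl (l\<lparr>lcounter := 0, pc := ReadBucket\<rparr>))
                 \<lparr>Bucket := (Bucket c)(index l := Bucket c (index l) + 1)\<rparr>
      | ReadBucket \<Rightarrow>
          index l < bsize k n m \<and>
          (let v = Bucket c (index l) in
           c' = setl (l\<lparr>val := v,
                        pc := (if index l = 0 \<and> v < NN k n then WriteLog
                               else if v \<ge> NN k n then WriteIdx else Idle)\<rparr>))
      | WriteLog \<Rightarrow>
          \<comment> \<open>here val < N, so the subsequent test val >= N fails\<close>
          c' = (setl (l\<lparr>pc := Idle\<rparr>))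
                 \<lparr>logNumIncrems := max (logNumIncrems c) \<lfloor>log (real k) (real (val l))\<rfloor>\<rparr>
      | WriteIdx \<Rightarrow>
          c' = (setl (l\<lparr>index := index l + 1,
                        threshold := (if index l + 1 > 1 then k * threshold l
                                      else if index l + 1 = 1 then k - 1 else threshold l),
                        pc := Idle\<rparr>))
                 \<lparr>logNumIncrems := max (logNumIncrems c) (int (cln k n + index l))\<rparr>)"

definition execution :: "nat \<Rightarrow> nat \<Rightarrow> nat \<Rightarrow> config list \<Rightarrow> bool" where
  "execution k n m cs \<longleftrightarrow>
     cs \<noteq> [] \<and> hd cs = init_config \<and>
     (\<forall>i. Suc i < length cs \<longrightarrow> (\<exists>p<n. step k n m p (cs ! i) (cs ! Suc i)))"

end

theory Submission
  imports Defs
begin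

definition Inv :: "nat \<Rightarrow> nat \<Rightarrow> config \<Rightarrow> bool" where
  "Inv k n c \<longleftrightarrow> (\<forall>p. pc (loc c p) = WriteLog \<longrightarrow> val (loc c p) < NN k n) \<and>
     (\<forall>p. 1 \<le> index (loc c p) \<longrightarrow> int (cln k n + index (loc c p)) - 1 \<le> logNumIncrems c)"

lemma floor_log_bound:
  assumes "k \<ge> 2" "v < NN k n"
  shows "\<lfloor>log (real k) (real v)\<rfloor> \<le> int (cln k n)"
proof (cases "v = 0")
  case True thus ?thesis by (simp add: log_def)
next
  case False
  have "real v < real k ^ cln k n" using assms(2) unfolding NN_def
    by (metis of_nat_less_iff of_nat_power)
  hence "log (real k) (real v) < log (real k) (real k ^ cln k n)"
    using False assms(1) by (subst log_less_cancel_iff) auto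
  also have "\<dots> = real (cln k n)" using assms(1) by (simp add: log_nat_power)
  finally show ?thesis by linarith
qed

lemma step_inv:
  assumes k: "k \<ge> 2" and st: "step k n m p c c'" and I: "Inv k n c"
  shows "Inv k n c' \<and> logNumIncrems c \<le> logNumIncrems c' \<and>
    (logNumIncrems c' > int (cln k n) \<and> logNumIncrems c' \<noteq> logNumIncrems c
      \<longrightarrow> logNumIncrems c = logNumIncrems c' - 1)"
proof (cases "pc (loc c p)")
  case WriteLog
  hence c': "c' = (c\<lparr>loc := (loc c)(p := (loc c p)\<lparr>pc := Idle\<rparr>)\<rparr>)
                 \<lparr>logNumIncrems := max (logNumIncrems c) \<lfloor>log (real k) (real (val (loc c p)))\<rfloor>\<rparr>"
    using st unfolding step_def by (simp add: Let_def)
  have "\<lfloor>log (real k) (real (val (loc c p)))\<rfloor> \<le> int (cln k n)"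
    using floor_log_bound[OF k] I WriteLog unfolding Inv_def by blast
  thus ?thesis using I unfolding c' Inv_def by auto
next
  case WriteIdx
  hence c': "c' = (c\<lparr>loc := (loc c)(p := (loc c p)\<lparr>index := index (loc c p) + 1,
                        threshold := (if index (loc c p) + 1 > 1 then k * threshold (loc c p)
                                      else if index (loc c p) + 1 = 1 then k - 1 else threshold (loc c p)),
                        pc := Idle\<rparr>)\<rparr>)
                 \<lparr>logNumIncrems := max (logNumIncrems c) (int (cln k n + index (loc c p)))\<rparr>"
    using st unfolding step_def by (simp add: Let_def)
  have A: "1 \<le> index (loc c p) \<Longrightarrow> int (cln k n + index (loc c p)) - 1 \<le> logNumIncrems c"
    using I unfolding Inv_def by blast
  have A2: "0 < index (loc c p) \<Longrightarrow> int (cln k n) + int (index (loc c p)) - 1 \<le> logNumIncrems c"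
    using A by simp
  show ?thesis using I A2 unfolding c' Inv_def
    apply (simp add: max_def)
    apply (intro conjI impI allI)
    apply auto
    using A2 by linarith
next
  case Idle
  thus ?thesis using st I unfolding step_def Inv_def by (auto simp: Let_def split: if_splits)
next
  case DoRead
  thus ?thesis using st I unfolding step_def Inv_def by (auto simp: Let_def)
next
  case IncBucket
  thus ?thesis using st I unfolding step_def Inv_def by (auto simp: Let_def)
next
  case ReadBucket
  thus ?thesis using st I unfolding step_def Inv_def by (auto simp: Let_def split: if_splits)
qed

lemma exec_inv:
  assumes k: "k \<ge> 2" and E: "execution k n m E"
  shows "j < length E \<Longrightarrow> Inv k n (E ! j)"
proof (induction j)
  case 0
  have "E ! 0 = init_config" using E unfolding execution_def by (metis hd_conv_nth)
  thus ?case unfolding Inv_def init_config_def init_lstate_def by simp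
next
  case (Suc j)
  then obtain p where "step k n m p (E ! j) (E ! Suc j)" using E unfolding execution_def by auto
  thus ?case using step_inv[OF k] Suc by auto
qed

lemma exec_step:
  assumes k: "k \<ge> 2" and E: "execution k n m E" and j: "Suc j < length E"
  shows "logNumIncrems (E!j) \<le> logNumIncrems (E ! Suc j) \<and>
    (logNumIncrems (E ! Suc j) > int (cln k n) \<and> logNumIncrems (E ! Suc j) \<noteq> logNumIncrems (E!j)
      \<longrightarrow> logNumIncrems (E!j) = logNumIncrems (E ! Suc j) - 1)"
proof -
  obtain p where "step k n m p (E ! j) (E ! Suc j)" using E j unfolding execution_def by auto
  moreover have "Inv k n (E ! j)" using exec_inv[OF k E] j by simp
  ultimately show ?thesis using step_inv[OF k] by blast
qed

theorem lemma15:
  fixes k n m :: nat and E :: "config list"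
  assumes "k \<ge> 2" and "n \<ge> 1" and "m \<ge> 1"
    and "execution k n m E"
  shows "hd (map logNumIncrems E) = -1
       \<and> sorted (map logNumIncrems E)
       \<and> (\<forall>i::int. i > int (cln k n) \<longrightarrow> i \<in> set (map logNumIncrems E)
                    \<longrightarrow> i - 1 \<in> set (map logNumIncrems E))"
proof (intro conjI allI impI)
  have ne: "E \<noteq> []" and h: "hd E = init_config" using assms(4) unfolding execution_def by auto
  show "hd (map logNumIncrems E) = -1" using ne h by (simp add: hd_map init_config_def)
  show "sorted (map logNumIncrems E)"
    unfolding sorted_iff_nth_Suc using exec_step[OF assms(1) assms(4)] by simp
  fix i :: int
  assume gt: "i > int (cln k n)" and "i \<in> set (map logNumIncrems E)"
  then obtain j where j: "j < length E" "logNumIncrems (E ! j) = i"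
    by (auto simp: in_set_conv_nth)
  have "E ! 0 = init_config" using ne h by (simp add: hd_conv_nth)
  then show "i - 1 \<in> set (map logNumIncrems E)" using j
  proof (induction j)
    case 0 thus ?case using gt by (simp add: init_config_def)
  next
    case (Suc j)
    show ?case
    proof (cases "logNumIncrems (E ! j) = i")
      case True thus ?thesis using Suc by simp
    next
      case False
      hence "logNumIncrems (E ! j) = i - 1"
        using exec_step[OF assms(1) assms(4), of j] Suc.prems gt by auto
      moreover have "E ! j \<in> set E" using Suc.prems by simp
    ultimately show ?thesis by (metis image_eqI set_map)
    qed
  qed
qed

end
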